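(* Let $B\ge2$ and suppose there is a constant $C$ such that for all sufficiently large $n$, $$\inf_{\alpha\in\mathcal{C}_B}\ \min_{k\in[n]}\Bigl|\frac{k}{n}-\alpha\Bigr|\le C\,\frac{\log n}{n^2}.$$ Then there is a constant $C'$ such that for every sufficiently large prime $p$ there exists $k\in\mathbb{Z}_p^\times$ with $D(\psi_k)\le C'\log p$.
   Context: $[n]=\{1,\dots,n\}$. $\mathcal{C}_B$ is the set of irrationals $\alpha=[a_0;a_1,a_2,\dots]$ whose partial quotients are bounded in average by $B$, i.e., $a_1+\dots+a_m\le Bm$ for all $m\ge1$. For $k\in\mathbb{Z}_p^\times$, $\psi_k:\mathbb{Z}_p\to\mathbb{Z}_p$ is the permutation $\psi_k(s)=ks$. An interval of $\mathbb{Z}_n$ is any subset that is the image of an interval of consecutive integers under the projection $\mathbb{Z}\to\mathbb{Z}_n$ (wrap-around allowed). For $S,T\subseteq\mathbb{Z}_n$, $D_T(S)=\bigl|\,|S\cap T|-|S||T|/n\,\bigr|$, and $D(\sigma)=\max_{I,J}D_J(\sigma(I))$ over all intervals $I,J$. *)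

theory Defs
  imports "HOL-Computational_Algebra.Primes" Complex_Main
begin

(* Complete quotients of the continued fraction expansion: x_0 = alpha,
   x_{i+1} = 1 / frac x_i.  Partial quotient a_i = floor x_i (for irrational alpha). *)
fun cf_rem :: "real \<Rightarrow> nat \<Rightarrow> real" where
  "cf_rem \<alpha> 0 = \<alpha>"
| "cf_rem \<alpha> (Suc i) = 1 / frac (cf_rem \<alpha> i)"

definition cf_quot :: "real \<Rightarrow> nat \<Rightarrow> int" where
  "cf_quot \<alpha> i = \<lfloor>cf_rem \<alpha> i\<rfloor>"

definition bounded_avg_cf :: "real \<Rightarrow> real set" where
  "bounded_avg_cf B = {\<alpha>. \<alpha> \<notin> \<rat> \<and>
      (\<forall>m\<ge>1. real_of_int (\<Sum>i=1..m. cf_quot \<alpha> i) \<le> B * real m)}"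

(* Z_n is represented by {0..<n} :: int set; intervals are images of integer intervals *)
definition zintervals :: "nat \<Rightarrow> int set set" where
  "zintervals n = {(\<lambda>x. x mod int n) ` {a..<b} | a b. True}"

definition disc :: "nat \<Rightarrow> int set \<Rightarrow> int set \<Rightarrow> real" where
  "disc n T S = \<bar>real (card (S \<inter> T)) - real (card S) * real (card T) / real n\<bar>"

definition perm_disc :: "nat \<Rightarrow> (int \<Rightarrow> int) \<Rightarrow> real" where
  "perm_disc n \<sigma> = Max {disc n J (\<sigma> ` I) | I J. I \<in> zintervals n \<and> J \<in> zintervals n}"

end

theory Submission
  imports Defs
begin


lemma hermite_int:
  fixes q :: nat assumes q: "q > 0"
  shows "(\<Sum>s<q. (m + int s) div int q) = m"
proof -
  define h where "h m = (\<Sum>s<q. (m + int s) div int q)" for m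
  have step: "h (m+1) = h m + 1" for m
  proof -
    have "h (m+1) = (\<Sum>s<q. (m + int (Suc s)) div int q)"
      unfolding h_def by (intro sum.cong) (auto simp: algebra_simps)
    also have "\<dots> = (\<Sum>s<Suc q. (m + int s) div int q) - (m + int 0) div int q"
      by (subst sum.lessThan_Suc_shift) simp
    also have "\<dots> = h m + (m + int q) div int q - m div int q"
      unfolding h_def by simp
    also have "(m + int q) div int q = m div int q + 1" using q by simp
    finally show ?thesis by simp
  qed
  have h0: "h 0 = 0" unfolding h_def using q by (intro sum.neutral) auto
  have "h m = m"
  proof (induction m rule: int_induct[where k=0])
    case base then show ?case using h0 by simp
  next
    case (step1 i) then show ?case using step[of i] by simp
  next
    case (step2 i) then show ?case using step[of "i-1"] by simp
  qed
  then show ?thesis unfolding h_def .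
qed

lemma bij_mult_mod:
  fixes q :: nat and r :: int
  assumes q: "q > 0" and cop: "coprime r (int q)"
  shows "bij_betw (\<lambda>t. nat ((int t * r) mod int q)) {..<q} {..<q}"
proof -
  have inj: "inj_on (\<lambda>t. nat ((int t * r) mod int q)) {..<q}"
  proof (rule inj_onI)
    fix t t' assume t: "t \<in> {..<q}" and t': "t' \<in> {..<q}"
      and eq: "nat ((int t * r) mod int q) = nat ((int t' * r) mod int q)"
    have "(int t * r) mod int q = (int t' * r) mod int q"
      using eq q by (simp add: nat_eq_iff)
    then have "int q dvd (int t - int t') * r"
      by (metis mod_eq_dvd_iff left_diff_distrib)
    then have "int q dvd (int t - int t')"
      using cop by (metis coprime_commute coprime_dvd_mult_left_iff)
    moreover have "\<bar>int t - int t'\<bar> < int q" using t t' by auto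
    ultimately show "t = t'"
      by (metis dvd_imp_le_int abs_of_nat diff_self eq_iff_diff_eq_0 linorder_not_le of_nat_eq_iff)
  qed
  have sub: "(\<lambda>t. nat ((int t * r) mod int q)) ` {..<q} \<subseteq> {..<q}"
    using q by (auto simp: nat_less_iff)
  have "card ((\<lambda>t. nat ((int t * r) mod int q)) ` {..<q}) = q"
    using card_image[OF inj] by simp
  then have "(\<lambda>t. nat ((int t * r) mod int q)) ` {..<q} = {..<q}"
    using sub by (metis card_lessThan card_subset_eq finite_lessThan)
  then show ?thesis using inj by (simp add: bij_betw_def)
qed

lemma floor_sum_perm:
  fixes q :: nat and r :: int and z :: real
  assumes q: "q > 0" and cop: "coprime r (int q)"
  shows "(\<Sum>t<q. \<lfloor>z + real t * r / q\<rfloor>) = \<lfloor>q * z\<rfloor> + (\<Sum>t<q. (int t * r) div int q)"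
proof -
  define m where "m = \<lfloor>q * z\<rfloor>"
  have "\<lfloor>z + real t * r / q\<rfloor> = (m + int t * r) div int q" for t
  proof -
    have "z + real t * r / q = (q * z + of_int (int t * r)) / real_of_int (int q)"
      using q by (simp add: field_simps)
    moreover have "\<lfloor>(q * z + of_int (int t * r)) / real_of_int (int q)\<rfloor> = \<lfloor>q * z + of_int (int t * r)\<rfloor> div int q"
      by (rule floor_divide_real_eq_div) simp
    ultimately have "\<lfloor>z + real t * r / q\<rfloor> = \<lfloor>q * z + of_int (int t * r)\<rfloor> div int q"
      by simp
    also have "\<lfloor>q * z + of_int (int t * r)\<rfloor> = m + int t * r" unfolding m_def by (rule floor_add_int[symmetric])
    finally show ?thesis .
  qed
  moreover have "(m + int t * r) div int q = (m + int (nat ((int t * r) mod int q))) div int q + (int t * r) div int q" for t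
  proof -
    have aux: "(m + x) div int q = (m + x mod int q) div int q + x div int q" for x :: int
    proof -
      have e: "m + x = (m + x mod int q) + x div int q * int q" by (metis add.assoc div_mult_mod_eq add.commute)
      have "(m + x) div int q = ((m + x mod int q) + x div int q * int q) div int q" by (rule arg_cong[OF e])
      also have "\<dots> = x div int q + (m + x mod int q) div int q" by (rule div_mult_self1) (use q in simp)
      finally show ?thesis by simp
    qed
    have "(m + int t * r) div int q = (m + (int t * r) mod int q) div int q + (int t * r) div int q"
      by (rule aux)
    then show ?thesis using q by simp
  qed
  ultimately have "(\<Sum>t<q. \<lfloor>z + real t * r / q\<rfloor>) = (\<Sum>t<q. (m + int (nat ((int t * r) mod int q))) div int q) + (\<Sum>t<q. (int t * r) div int q)"
    by (simp add: sum.distrib)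
  also have "(\<Sum>t<q. (m + int (nat ((int t * r) mod int q))) div int q) = (\<Sum>s<q. (m + int s) div int q)"
    using sum.reindex_bij_betw[OF bij_mult_mod[OF q cop], of "\<lambda>s. (m + int s) div int q"] by simp
  also have "\<dots> = m" using hermite_int[OF q] .
  finally show ?thesis unfolding m_def .
qed



lemma ind_floor:
  fixes y l :: real assumes "0 \<le> l" "l \<le> 1"
  shows "(if frac y < l then 1 else 0) = real_of_int (\<lfloor>y\<rfloor> - \<lfloor>y - l\<rfloor>)"
proof (cases "frac y < l")
  case True
  have "\<lfloor>y - l\<rfloor> = \<lfloor>y\<rfloor> - 1"
    using True assms by (intro floor_unique) (auto simp: frac_def, linarith+)
  then show ?thesis using True by simp
next
  case False
  have "\<lfloor>y - l\<rfloor> = \<lfloor>y\<rfloor>"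
    using False assms by (intro floor_unique) (auto simp: frac_def, linarith+)
  then show ?thesis using False by simp
qed

definition cnt :: "real \<Rightarrow> real \<Rightarrow> real \<Rightarrow> nat \<Rightarrow> real" where
  "cnt \<beta> l x N = (\<Sum>t<N. if frac (x + real t * \<beta>) < l then 1 else 0)"

lemma cnt_add: "cnt \<beta> l x (M + N) = cnt \<beta> l x M + cnt \<beta> l (x + real M * \<beta>) N"
proof (induction N)
  case 0 then show ?case by (simp add: cnt_def)
next
  case (Suc N)
  have eq: "x + real M * \<beta> + real N * \<beta> = x + real (M + N) * \<beta>" by (simp add: algebra_simps)
  have "cnt \<beta> l x (M + Suc N) = cnt \<beta> l x (M + N) + (if frac (x + real (M + N) * \<beta>) < l then 1 else 0)"
    by (simp add: cnt_def)
  moreover have "cnt \<beta> l (x + real M * \<beta>) (Suc N) = cnt \<beta> l (x + real M * \<beta>) N + (if frac (x + real (M + N) * \<beta>) < l then 1 else 0)"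
    unfolding cnt_def by (simp only: sum.lessThan_Suc eq)
  ultimately show ?case using Suc by simp
qed

lemma block:
  fixes q :: nat and r :: int and \<beta> x l :: real
  assumes q: "q > 0" and cop: "coprime r (int q)" and l: "0 \<le> l" "l \<le> 1"
  shows "\<bar>cnt \<beta> l x q - q * l\<bar> \<le> 1 + 2 * q * \<bar>q * \<beta> - r\<bar>"
proof -
  define D where "D = \<bar>q * \<beta> - r\<bar>"
  define K0 where "K0 = (\<Sum>t<q. (int t * r) div int q)"
  define G where "G z = (\<Sum>t<q. \<lfloor>z + real t * r / q\<rfloor>)" for z
  have G: "G z = \<lfloor>q * z\<rfloor> + K0" for z :: real unfolding G_def K0_def by (rule floor_sum_perm[OF q cop])
  have e: "\<bar>real t * \<beta> - real t * r / q\<bar> \<le> D" if "t < q" for t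
  proof -
    have "real t * \<beta> - real t * r / q = (real t / q) * (q * \<beta> - r)" using q by (simp add: field_simps)
    then have "\<bar>real t * \<beta> - real t * r / q\<bar> = (real t / q) * D" unfolding D_def using q by (simp add: abs_mult)
    also have "\<dots> \<le> 1 * D" using that q unfolding D_def by (intro mult_right_mono) auto
    finally show ?thesis by simp
  qed
  have mono1: "G (w - D) \<le> (\<Sum>t<q. \<lfloor>w + real t * \<beta>\<rfloor>) \<and> (\<Sum>t<q. \<lfloor>w + real t * \<beta>\<rfloor>) \<le> G (w + D)" for w
  proof
    show "G (w - D) \<le> (\<Sum>t<q. \<lfloor>w + real t * \<beta>\<rfloor>)" unfolding G_def
      by (intro sum_mono floor_mono) (use e in \<open>force simp: abs_le_iff\<close>)
    show "(\<Sum>t<q. \<lfloor>w + real t * \<beta>\<rfloor>) \<le> G (w + D)" unfolding G_def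
      by (intro sum_mono floor_mono) (use e in \<open>force simp: abs_le_iff\<close>)
  qed
  have c: "cnt \<beta> l x q = real_of_int ((\<Sum>t<q. \<lfloor>x + real t * \<beta>\<rfloor>) - (\<Sum>t<q. \<lfloor>(x - l) + real t * \<beta>\<rfloor>))"
  proof -
    have "cnt \<beta> l x q = (\<Sum>t<q. real_of_int (\<lfloor>x + real t * \<beta>\<rfloor> - \<lfloor>(x - l) + real t * \<beta>\<rfloor>))"
      unfolding cnt_def
    proof (intro sum.cong refl)
      fix t
      have "(x - l) + real t * \<beta> = (x + real t * \<beta>) - l" by simp
      then have e: "\<lfloor>(x - l) + real t * \<beta>\<rfloor> = \<lfloor>(x + real t * \<beta>) - l\<rfloor>" by (simp only:)
      show "(if frac (x + real t * \<beta>) < l then 1 else 0) = real_of_int (\<lfloor>x + real t * \<beta>\<rfloor> - \<lfloor>(x - l) + real t * \<beta>\<rfloor>)"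
        unfolding e by (rule ind_floor[OF l])
    qed
    then show ?thesis by (simp only: of_int_diff of_int_sum sum_subtractf)
  qed
  have u: "real_of_int (\<lfloor>q * (x + D)\<rfloor> - \<lfloor>q * (x - l - D)\<rfloor>) \<le> q * l + 2 * q * D + 1"
  proof -
    have a1: "real_of_int \<lfloor>q * (x + D)\<rfloor> \<le> q * (x + D)" by (rule of_int_floor_le)
    have a2: "q * (x - l - D) < real_of_int \<lfloor>q * (x - l - D)\<rfloor> + 1" by (rule real_of_int_floor_add_one_gt)
    have a3: "q * (x + D) = q * x + q * D" "q * (x - l - D) = q * x - q * l - q * D" by (simp_all add: algebra_simps)
    show ?thesis using a1 a2 a3 of_int_diff[of "\<lfloor>q * (x + D)\<rfloor>" "\<lfloor>q * (x - l - D)\<rfloor>"] by linarith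
  qed
  have lo: "real_of_int (\<lfloor>q * (x - D)\<rfloor> - \<lfloor>q * (x - l + D)\<rfloor>) \<ge> q * l - 2 * q * D - 1"
  proof -
    have a1: "real_of_int \<lfloor>q * (x - l + D)\<rfloor> \<le> q * (x - l + D)" by (rule of_int_floor_le)
    have a2: "q * (x - D) < real_of_int \<lfloor>q * (x - D)\<rfloor> + 1" by (rule real_of_int_floor_add_one_gt)
    have a3: "q * (x - D) = q * x - q * D" "q * (x - l + D) = q * x - q * l + q * D" by (simp_all add: algebra_simps)
    show ?thesis using a1 a2 a3 of_int_diff[of "\<lfloor>q * (x - D)\<rfloor>" "\<lfloor>q * (x - l + D)\<rfloor>"] by linarith
  qed
  have "cnt \<beta> l x q \<le> q * l + 2 * q * D + 1"
  proof -
    have "cnt \<beta> l x q \<le> real_of_int (G (x + D) - G (x - l - D))"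
      unfolding c using mono1[of x] mono1[of "x - l"] by (simp del: of_int_diff)
    also have "\<dots> = real_of_int (\<lfloor>q * (x + D)\<rfloor> - \<lfloor>q * (x - l - D)\<rfloor>)" by (simp add: G)
    finally show ?thesis using u by linarith
  qed
  moreover have "cnt \<beta> l x q \<ge> q * l - 2 * q * D - 1"
  proof -
    have "cnt \<beta> l x q \<ge> real_of_int (G (x - D) - G (x - l + D))"
      unfolding c using mono1[of x] mono1[of "x - l"] by (simp del: of_int_diff)
    also have "real_of_int (G (x - D) - G (x - l + D)) = real_of_int (\<lfloor>q * (x - D)\<rfloor> - \<lfloor>q * (x - l + D)\<rfloor>)" by (simp add: G)
    finally show ?thesis using lo by linarith
  qed
  ultimately show ?thesis unfolding D_def by (simp add: abs_le_iff algebra_simps)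
qed



lemma multi_block:
  fixes b q :: nat and E :: real
  assumes "\<And>y. \<bar>cnt \<beta> l y q - real q * l\<bar> \<le> E"
  shows "\<bar>cnt \<beta> l x (b * q) - real (b * q) * l\<bar> \<le> real b * E"
proof (induction b arbitrary: x)
  case 0 then show ?case by (simp add: cnt_def)
next
  case (Suc b)
  have "cnt \<beta> l x (Suc b * q) = cnt \<beta> l x (b * q) + cnt \<beta> l (x + real (b * q) * \<beta>) q"
  proof -
    have "Suc b * q = b * q + q" by simp
    then show ?thesis by (simp only: cnt_add)
  qed
  moreover have "real (Suc b * q) * l = real (b * q) * l + q * l" by (simp add: algebra_simps)
  ultimately show ?case using Suc[of x] assms[of "x + real (b * q) * \<beta>"]
    by (simp add: algebra_simps abs_le_iff)
qed

lemma Q_basic: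
  fixes Q a :: "nat \<Rightarrow> int"
  assumes Q0: "Q 0 = 0" and Q1: "Q 1 = 1"
    and Qrec: "\<And>n. Q (n+2) = a (n+1) * Q (n+1) + Q n"
    and apos: "\<And>n. a (n+1) \<ge> 1"
  shows "0 \<le> Q n \<and> Q n \<le> Q (n+1) \<and> 1 \<le> Q (n+1)"
proof (induction n)
  case 0 then show ?case using Q0 Q1 by simp
next
  case (Suc n)
  have m: "a (n+1) * Q (n+1) \<ge> 1 * Q (n+1)"
    using Suc apos[of n] by (intro mult_right_mono) auto
  have h: "Q (n+2) = a (n+1) * Q (n+1) + Q n" by (rule Qrec)
  have "0 \<le> Q (n+1) \<and> Q (n+1) \<le> Q (n+2) \<and> 1 \<le> Q (n+2)"
    using Suc m h by (intro conjI; linarith)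
  then show ?case by (simp add: numeral_2_eq_2)
qed

lemma ostrowski:
  fixes Q P a :: "nat \<Rightarrow> int" and \<beta> \<eta> l :: real
  assumes Q0: "Q 0 = 0" and Q1: "Q 1 = 1"
    and Qrec: "\<And>n. Q (n+2) = a (n+1) * Q (n+1) + Q n"
    and apos: "\<And>n. a (n+1) \<ge> 1"
    and cop: "\<And>n. coprime (P (n+1)) (Q (n+1))"
    and appr: "\<And>n. \<bar>Q (n+1) * \<beta> - P (n+1)\<bar> \<le> 1 / Q (n+2) + Q (n+1) * \<eta>"
    and l: "0 \<le> l" "l \<le> 1" and eta: "\<eta> \<ge> 0"
  shows "N < Q (n+1) \<Longrightarrow> \<bar>cnt \<beta> l x N - N * l\<bar> \<le> 3 * (\<Sum>j=1..n. a j) + 2 * \<eta> * N^2"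
proof (induction n arbitrary: N x)
  case 0
  then have "N = 0" using Q1 by simp
  then show ?case by (simp add: cnt_def)
next
  case (Suc n)
  note QB = Q_basic[OF Q0 Q1 Qrec apos]
  define q where "q = nat (Q (n+1))"
  have qQ: "int q = Q (n+1)" "real q = real_of_int (Q (n+1))" using QB[of n] unfolding q_def by auto
  have q0: "q > 0" using QB[of n] unfolding q_def by auto
  have Q2pos: "real_of_int (Q (n+2)) \<ge> real q" using QB[of "n+1"] qQ by simp
  have blk: "\<bar>cnt \<beta> l y q - q * l\<bar> \<le> 3 + 2 * \<eta> * (real q)^2" for y
  proof -
    have c: "coprime (P (n+1)) (int q)" using cop[of n] qQ by simp
    have b1: "\<bar>cnt \<beta> l y q - q * l\<bar> \<le> 1 + 2 * q * \<bar>q * \<beta> - P (n+1)\<bar>"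
      by (rule block[OF q0 c l])
    have "\<bar>q * \<beta> - P (n+1)\<bar> \<le> 1 / Q (n+2) + q * \<eta>" using appr[of n] unfolding qQ(2) by simp
    then have "2 * q * \<bar>q * \<beta> - P (n+1)\<bar> \<le> 2 * q * (1 / Q (n+2) + q * \<eta>)"
      by (intro mult_left_mono) auto
    also have "\<dots> = 2 * (q / Q (n+2)) + 2 * \<eta> * (real q)^2" by (simp add: algebra_simps power2_eq_square)
    also have "q / Q (n+2) \<le> 1" using Q2pos q0 by (simp add: divide_le_eq_1)
    finally show ?thesis using b1 by linarith
  qed
  define b where "b = N div q"
  define r where "r = N mod q"
  have Nbr: "N = b * q + r" unfolding b_def r_def by simp
  have rq: "r < q" unfolding r_def using q0 by simp
  have "real N < real_of_int (Q (n+2))" using Suc.prems by simp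
  also have "\<dots> = a (n+1) * q + Q n" using Qrec[of n] qQ by simp
  also have "\<dots> \<le> (a (n+1) + 1) * q" using QB[of n] qQ by (simp add: algebra_simps)
  finally have "real b * q < (a (n+1) + 1) * q" using Nbr by (simp add: algebra_simps)
  then have "real b < a (n+1) + 1" using q0 by (simp add: mult_less_cancel_right)
  then have "real_of_int (int b) < real_of_int (a (n+1) + 1)" by simp
  then have "int b < a (n+1) + 1" by (simp only: of_int_less_iff)
  then have "int b \<le> a (n+1)" by simp
  then have "real_of_int (int b) \<le> real_of_int (a (n+1))" by (simp only: of_int_le_iff)
  then have ba: "real b \<le> a (n+1)" by simp
  have IH: "\<bar>cnt \<beta> l (x + real (b * q) * \<beta>) r - r * l\<bar> \<le> 3 * (\<Sum>j=1..n. a j) + 2 * \<eta> * (real r)^2"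
    using Suc.IH[of r] rq qQ by simp
  have MB: "\<bar>cnt \<beta> l x (b * q) - (b * q) * l\<bar> \<le> b * (3 + 2 * \<eta> * (real q)^2)"
    by (rule multi_block) (rule blk)
  have split: "cnt \<beta> l x N = cnt \<beta> l x (b * q) + cnt \<beta> l (x + real (b * q) * \<beta>) r"
    using Nbr cnt_add by simp
  have bq: "real b * (real q)^2 \<le> real (b * q) * N"
  proof (cases "b = 0")
    case False
    then have "q \<le> b * q" by simp
    then have "q \<le> N" using Nbr by linarith
    then have "real b * q * q \<le> real b * q * N" by (intro mult_left_mono) auto
    then show ?thesis by (simp add: power2_eq_square mult.assoc)
  qed simp
  have rN: "real r * r \<le> real r * N" using Nbr by (intro mult_left_mono) auto
  have "\<bar>cnt \<beta> l x N - N * l\<bar> \<le> b * (3 + 2 * \<eta> * (real q)^2) + (3 * (\<Sum>j=1..n. a j) + 2 * \<eta> * (real r)^2)"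
    using split MB IH Nbr by (simp add: abs_le_iff algebra_simps)
  also have "b * (3 + 2 * \<eta> * (real q)^2) = 3 * b + 2 * \<eta> * (b * (real q)^2)" by (simp add: algebra_simps)
  also have "\<dots> \<le> 3 * a (n+1) + 2 * \<eta> * (real (b * q) * N)"
    using ba bq eta by (intro add_mono mult_left_mono) auto
  finally have "\<bar>cnt \<beta> l x N - N * l\<bar> \<le> 3 * (\<Sum>j=1..n. a j) + 3 * a (n+1) + 2 * \<eta> * (real (b * q) * N + r * r)"
    by (simp add: algebra_simps power2_eq_square)
  also have "2 * \<eta> * (real (b * q) * N + r * r) \<le> 2 * \<eta> * (real (b * q) * N + r * N)"
    using rN eta by (intro mult_left_mono) auto
  also have "real (b * q) * N + r * N = real N * N" using Nbr by (simp add: algebra_simps)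
  finally show ?case by (simp add: power2_eq_square algebra_simps)
qed



fun cfQ :: "real \<Rightarrow> nat \<Rightarrow> int" where
  "cfQ \<alpha> 0 = 0"
| "cfQ \<alpha> (Suc 0) = 1"
| "cfQ \<alpha> (Suc (Suc n)) = cf_quot \<alpha> (Suc n) * cfQ \<alpha> (Suc n) + cfQ \<alpha> n"

fun cfP :: "real \<Rightarrow> nat \<Rightarrow> int" where
  "cfP \<alpha> 0 = 1"
| "cfP \<alpha> (Suc 0) = cf_quot \<alpha> 0"
| "cfP \<alpha> (Suc (Suc n)) = cf_quot \<alpha> (Suc n) * cfP \<alpha> (Suc n) + cfP \<alpha> n"

lemma irrat_step: "x \<notin> \<rat> \<Longrightarrow> 1 / frac x \<notin> \<rat>"
proof
  assume x: "x \<notin> \<rat>" and r: "1 / frac x \<in> \<rat>"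
  then have "frac x \<in> \<rat>" by (metis Rats_inverse inverse_eq_divide inverse_inverse_eq)
  then have "frac x + of_int \<lfloor>x\<rfloor> \<in> \<rat>" by (intro Rats_add) auto
  then show False using x by (simp add: frac_def)
qed

lemma cf_rem_irrat: "\<alpha> \<notin> \<rat> \<Longrightarrow> cf_rem \<alpha> n \<notin> \<rat>"
proof (induction n)
  case (Suc n) then show ?case using irrat_step[OF Suc.IH] by simp
qed simp

lemma frac_pos_irrat: "x \<notin> \<rat> \<Longrightarrow> frac x > 0"
proof -
  assume x: "x \<notin> \<rat>"
  have "frac x \<noteq> 0"
  proof
    assume "frac x = 0"
    then have "x = of_int \<lfloor>x\<rfloor>" by (simp add: frac_def)
    then have "x \<in> \<rat>" by (metis Rats_of_int)
    then show False using x by simp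
  qed
  then show ?thesis using frac_ge_0[of x] by linarith
qed

context
  fixes \<alpha> :: real
  assumes irr: "\<alpha> \<notin> \<rat>"
begin

lemma cf_frac_pos: "frac (cf_rem \<alpha> n) > 0"
  using frac_pos_irrat[OF cf_rem_irrat[OF irr]] .

lemma cf_rem_gt1: "cf_rem \<alpha> (Suc n) > 1"
proof -
  have "frac (cf_rem \<alpha> n) < 1" by (rule frac_lt_1)
  then show ?thesis using cf_frac_pos[of n] by (simp add: field_simps)
qed

lemma cf_quot_ge1: "cf_quot \<alpha> (Suc n) \<ge> 1"
  unfolding cf_quot_def using cf_rem_gt1[of n] by (simp add: le_floor_iff)

lemma cf_rem_eq: "cf_rem \<alpha> n = cf_quot \<alpha> n + 1 / cf_rem \<alpha> (Suc n)"
  using cf_frac_pos[of n] by (simp add: cf_quot_def frac_def)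

lemma cf_quot_le_rem: "real_of_int (cf_quot \<alpha> n) \<le> cf_rem \<alpha> n"
  unfolding cf_quot_def by simp

declare cf_rem.simps(2)[simp del]

definition cfE :: "nat \<Rightarrow> real" where
  "cfE n = cfQ \<alpha> n * \<alpha> - cfP \<alpha> n"

lemma cfE_rec: "cfE (Suc (Suc n)) = cf_quot \<alpha> (Suc n) * cfE (Suc n) + cfE n"
  unfolding cfE_def by (simp add: algebra_simps)

lemma cfE_mult: "cf_rem \<alpha> (Suc n) * cfE (Suc n) = - cfE n"
proof (induction n)
  case 0
  have "cfE 1 = frac \<alpha>" unfolding cfE_def by (simp add: cf_quot_def frac_def)
  moreover have "cfE 0 = -1" unfolding cfE_def by simp
  ultimately show ?case using cf_frac_pos[of 0] by (simp add: cf_rem.simps(2))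
next
  case (Suc n)
  define y where "y = cf_rem \<alpha> (Suc (Suc n))"
  have y: "y * frac (cf_rem \<alpha> (Suc n)) = 1" unfolding y_def using cf_frac_pos[of "Suc n"] by (simp add: cf_rem.simps(2))
  have fr: "frac (cf_rem \<alpha> (Suc n)) = cf_rem \<alpha> (Suc n) - cf_quot \<alpha> (Suc n)"
    by (simp add: frac_def cf_quot_def)
  have "y * cfE (Suc (Suc n)) = y * (cf_quot \<alpha> (Suc n) * cfE (Suc n) + cfE n)" by (simp add: cfE_rec)
  also have "\<dots> = y * (cf_quot \<alpha> (Suc n) * cfE (Suc n) - cf_rem \<alpha> (Suc n) * cfE (Suc n))"
    using Suc by simp
  also have "\<dots> = - (y * frac (cf_rem \<alpha> (Suc n))) * cfE (Suc n)" unfolding fr by (simp add: algebra_simps)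
  also have "\<dots> = - cfE (Suc n)" using y by simp
  finally show ?case unfolding y_def .
qed

lemma cfQ_basic: "0 \<le> cfQ \<alpha> n \<and> cfQ \<alpha> n \<le> cfQ \<alpha> (n+1) \<and> 1 \<le> cfQ \<alpha> (n+1)"
proof -
  have r: "\<And>n. cfQ \<alpha> (n+2) = cf_quot \<alpha> (n+1) * cfQ \<alpha> (n+1) + cfQ \<alpha> n" by (simp add: numeral_2_eq_2)
  have a: "\<And>n. cf_quot \<alpha> (n+1) \<ge> 1" using cf_quot_ge1 by simp
  show ?thesis by (rule Q_basic[OF _ _ r a]) simp_all
qed

lemma cfE_abs: "\<bar>cfE (Suc n)\<bar> * (cf_rem \<alpha> (Suc n) * cfQ \<alpha> (Suc n) + cfQ \<alpha> n) = 1"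
proof (induction n)
  case 0
  have "cfE 1 = frac \<alpha>" unfolding cfE_def by (simp add: cf_quot_def frac_def)
  then show ?case using cf_frac_pos[of 0] by (simp add: cf_rem.simps(2))
next
  case (Suc n)
  define y where "y = cf_rem \<alpha> (Suc (Suc n))"
  have ypos: "y > 0" unfolding y_def using cf_rem_gt1[of "Suc n"] by linarith
  have e: "\<bar>cfE (Suc (Suc n))\<bar> = \<bar>cfE (Suc n)\<bar> / y"
    using cfE_mult[of "Suc n"] ypos unfolding y_def[symmetric]
    by (metis abs_minus_cancel abs_mult abs_of_pos nonzero_eq_divide_eq order_less_irrefl mult.commute)
  have a: "real_of_int (cf_quot \<alpha> (Suc n)) = cf_rem \<alpha> (Suc n) - 1 / y"
    using cf_rem_eq[of "Suc n"] unfolding y_def by simp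
  have "y * cfQ \<alpha> (Suc (Suc n)) + cfQ \<alpha> (Suc n) = y * (cf_rem \<alpha> (Suc n) * cfQ \<alpha> (Suc n) + cfQ \<alpha> n)"
    using ypos by (simp add: a field_simps)
  then have "\<bar>cfE (Suc (Suc n))\<bar> * (y * cfQ \<alpha> (Suc (Suc n)) + cfQ \<alpha> (Suc n))
     = (\<bar>cfE (Suc n)\<bar> / y) * (y * (cf_rem \<alpha> (Suc n) * cfQ \<alpha> (Suc n) + cfQ \<alpha> n))" unfolding e by simp
  also have "\<dots> = \<bar>cfE (Suc n)\<bar> * (cf_rem \<alpha> (Suc n) * cfQ \<alpha> (Suc n) + cfQ \<alpha> n)" using ypos by simp
  also have "\<dots> = 1" by (rule Suc.IH)
  finally show ?case unfolding y_def .
qed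

lemma cf_approx: "\<bar>cfQ \<alpha> (Suc n) * \<alpha> - cfP \<alpha> (Suc n)\<bar> \<le> 1 / cfQ \<alpha> (Suc (Suc n))"
proof -
  define d where "d = cf_rem \<alpha> (Suc n) * cfQ \<alpha> (Suc n) + cfQ \<alpha> n"
  have QB: "0 \<le> cfQ \<alpha> n" "1 \<le> cfQ \<alpha> (Suc n)" using cfQ_basic[of n] by auto
  have "real_of_int (cfQ \<alpha> (Suc (Suc n))) = real_of_int (cf_quot \<alpha> (Suc n)) * real_of_int (cfQ \<alpha> (Suc n)) + real_of_int (cfQ \<alpha> n)" by simp
  also have "\<dots> \<le> d" unfolding d_def using QB cf_quot_le_rem[of "Suc n"]
    by (intro add_right_mono mult_right_mono) auto
  finally have dQ: "real_of_int (cfQ \<alpha> (Suc (Suc n))) \<le> d" .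
  have "1 \<le> cfQ \<alpha> (Suc (Suc n))" using cfQ_basic[of "Suc n"] by simp
  then have Q2: "real_of_int (cfQ \<alpha> (Suc (Suc n))) \<ge> 1" by (metis of_int_1 of_int_le_iff)
  have "\<bar>cfE (Suc n)\<bar> = 1 / d" using cfE_abs[of n] unfolding d_def[symmetric]
    by (metis mult_eq_0_iff nonzero_eq_divide_eq one_neq_zero)
  also have "\<dots> \<le> 1 / cfQ \<alpha> (Suc (Suc n))" using dQ Q2 by (intro divide_left_mono) auto
  finally show ?thesis unfolding cfE_def .
qed

lemma cf_det: "cfP \<alpha> (Suc n) * cfQ \<alpha> n - cfP \<alpha> n * cfQ \<alpha> (Suc n) = (-1) ^ Suc n"
proof (induction n)
  case 0 then show ?case by simp
next
  case (Suc n)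
  have "cfP \<alpha> (Suc (Suc n)) * cfQ \<alpha> (Suc n) - cfP \<alpha> (Suc n) * cfQ \<alpha> (Suc (Suc n))
      = - (cfP \<alpha> (Suc n) * cfQ \<alpha> n - cfP \<alpha> n * cfQ \<alpha> (Suc n))" by (simp add: algebra_simps)
  then show ?case using Suc by simp
qed

lemma cf_coprime: "coprime (cfP \<alpha> (Suc n)) (cfQ \<alpha> (Suc n))"
proof -
  have "cfP \<alpha> (Suc n) * cfQ \<alpha> n - cfP \<alpha> n * cfQ \<alpha> (Suc n) = (-1) ^ Suc n" by (rule cf_det)
  then have "is_unit (cfP \<alpha> (Suc n) * cfQ \<alpha> n - cfP \<alpha> n * cfQ \<alpha> (Suc n))" by simp
  show ?thesis
  proof (rule coprimeI)
    fix c assume c: "c dvd cfP \<alpha> (Suc n)" "c dvd cfQ \<alpha> (Suc n)"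
    have "c dvd cfP \<alpha> (Suc n) * cfQ \<alpha> n - cfP \<alpha> n * cfQ \<alpha> (Suc n)"
      using c by (intro dvd_diff dvd_mult2 dvd_mult)
    then show "is_unit c" using \<open>is_unit _\<close> by (rule dvd_unit_imp_unit)
  qed
qed

end



lemma inj_mult_mod:
  fixes n :: nat and c a b :: int
  assumes n: "n > 0" and cop: "coprime c (int n)" and ab: "b - a \<le> int n"
  shows "inj_on (\<lambda>x. (c * x) mod int n) {a..<b}"
proof (rule inj_onI)
  fix x y assume x: "x \<in> {a..<b}" and y: "y \<in> {a..<b}" and eq: "(c * x) mod int n = (c * y) mod int n"
  then have "int n dvd c * x - c * y" by (simp add: mod_eq_dvd_iff)
  then have "int n dvd c * (x - y)" by (simp add: right_diff_distrib)
  moreover have "coprime (int n) c" using cop by (simp add: coprime_commute)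
  ultimately have d: "int n dvd (x - y)" using coprime_dvd_mult_right_iff by blast
  have "\<bar>x - y\<bar> < int n" using x y ab by auto
  show "x = y"
  proof (rule ccontr)
    assume "x \<noteq> y"
    then have "\<bar>int n\<bar> \<le> \<bar>x - y\<bar>" using d by (intro dvd_imp_le_int) auto
    then show False using \<open>\<bar>x - y\<bar> < int n\<close> by simp
  qed
qed

lemma img_mult_mod_sub: "n > 0 \<Longrightarrow> (\<lambda>x. (c * x) mod int n) ` A \<subseteq> {0..<int n}"
  by auto

lemma img_mult_mod_full:
  fixes n :: nat and c a b :: int
  assumes n: "n > 0" and cop: "coprime c (int n)" and ab: "b - a \<ge> int n"
  shows "(\<lambda>x. (c * x) mod int n) ` {a..<b} = {0..<int n}"
proof -
  have inj: "inj_on (\<lambda>x. (c * x) mod int n) {a..<a + int n}"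
    by (rule inj_mult_mod[OF n cop]) simp
  have "card ((\<lambda>x. (c * x) mod int n) ` {a..<a + int n}) = n"
    using card_image[OF inj] by simp
  moreover have "card {0..<int n} = n" by simp
  ultimately have e: "(\<lambda>x. (c * x) mod int n) ` {a..<a + int n} = {0..<int n}"
    using img_mult_mod_sub[OF n] card_subset_eq[of "{0..<int n}"] by (metis finite_atLeastLessThan_int)
  have sub: "(\<lambda>x. (c * x) mod int n) ` {a..<a + int n} \<subseteq> (\<lambda>x. (c * x) mod int n) ` {a..<b}"
    using ab by (intro image_mono) auto
  show ?thesis
  proof (rule antisym)
    show "(\<lambda>x. (c * x) mod int n) ` {a..<b} \<subseteq> {0..<int n}" by (rule img_mult_mod_sub[OF n])
    show "{0..<int n} \<subseteq> (\<lambda>x. (c * x) mod int n) ` {a..<b}" using sub unfolding e .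
  qed
qed

lemma mod_img_mem:
  fixes n :: nat and c d y :: int
  assumes n: "n > 0" and cd: "c \<le> d" "d - c \<le> int n"
  shows "y mod int n \<in> (\<lambda>x. x mod int n) ` {c..<d} \<longleftrightarrow> (y - c) mod int n < d - c"
proof
  assume "y mod int n \<in> (\<lambda>x. x mod int n) ` {c..<d}"
  then obtain z where z: "z \<in> {c..<d}" "y mod int n = z mod int n" by auto
  have "(y - c) mod int n = (z - c) mod int n" using z(2) by (metis mod_diff_left_eq)
  also have "\<dots> = z - c" using z(1) cd by (intro mod_pos_pos_trivial) auto
  finally show "(y - c) mod int n < d - c" using z(1) by simp
next
  assume h: "(y - c) mod int n < d - c"
  define z where "z = c + (y - c) mod int n"
  have "z \<in> {c..<d}" using h n unfolding z_def by simp
  moreover have "z mod int n = y mod int n" unfolding z_def by (metis add.commute diff_add_cancel mod_add_right_eq)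
  ultimately show "y mod int n \<in> (\<lambda>x. x mod int n) ` {c..<d}" by (metis image_eqI)
qed

lemma frac_int_div:
  fixes Y :: int and n :: nat assumes n: "n > 0"
  shows "frac (real_of_int Y / real n) = real_of_int (Y mod int n) / real n"
proof -
  have "real_of_int Y / real n = real_of_int (Y div int n) + real_of_int (Y mod int n) / real n"
  proof -
    have "Y = Y div int n * int n + Y mod int n" by simp
    then have "real_of_int Y = real_of_int (Y div int n) * real n + real_of_int (Y mod int n)"
      by (metis of_int_add of_int_mult of_int_of_nat_eq)
    then show ?thesis using n by (simp add: field_simps)
  qed
  moreover have "0 \<le> real_of_int (Y mod int n) / real n" using n by simp
  moreover have "real_of_int (Y mod int n) / real n < 1"
  proof -
    have "Y mod int n < int n" using n by simp
    then have "real_of_int (Y mod int n) < real_of_int (int n)" by (simp only: of_int_less_iff)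
    then show ?thesis using n by simp
  qed
  ultimately show ?thesis by (simp add: frac_unique_iff)
qed



lemma card_filter_sum: fixes N :: nat shows "real (card {t \<in> {..<N}. P t}) = (\<Sum>t<N. if P t then 1 else 0)"
proof -
  have "(\<Sum>t\<in>{t \<in> {..<N}. P t}. (1::real)) = (\<Sum>t<N. if P t then 1 else 0)"
    by (rule sum.inter_filter) simp
  then show ?thesis by simp
qed

lemma disc_pair:
  fixes p :: nat and k a b c d :: int and K :: real
  assumes p: "p > 0" and cop: "coprime k (int p)" and K: "K \<ge> 0"
    and H: "\<And>x N m. N < p \<Longrightarrow> 0 < m \<Longrightarrow> m < p \<Longrightarrow>
              \<bar>cnt (real_of_int k / p) (real m / p) x N - real N * (real m / p)\<bar> \<le> K"
  shows "disc p ((\<lambda>x. x mod int p) ` {c..<d}) ((\<lambda>x. (k * x) mod int p) ` {a..<b}) \<le> K"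
proof -
  define S where "S = (\<lambda>x. (k * x) mod int p) ` {a..<b}"
  define J where "J = (\<lambda>x. x mod int p) ` {c..<d}"
  have Ssub: "S \<subseteq> {0..<int p}" unfolding S_def using p by auto
  have Jsub: "J \<subseteq> {0..<int p}" unfolding J_def using p by auto
  have fin: "finite S" "finite J" using Ssub Jsub finite_subset by auto
  show ?thesis
  proof (cases "b \<le> a \<or> d \<le> c")
    case True
    then have "S = {} \<or> J = {}" unfolding S_def J_def by auto
    then show ?thesis using K unfolding S_def[symmetric] J_def[symmetric] disc_def by auto
  next
    case False
    note ne = False
    show ?thesis
    proof (cases "b - a \<ge> int p \<or> d - c \<ge> int p")
      case True
      then have "S = {0..<int p} \<or> J = {0..<int p}"
      proof
        assume "b - a \<ge> int p" then show ?thesis unfolding S_def using img_mult_mod_full[OF p cop] by blast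
      next
        assume "d - c \<ge> int p" then have "J = {0..<int p}" unfolding J_def using img_mult_mod_full[OF p, of 1 d c] by simp
        then show ?thesis by blast
      qed
      then have "disc p J S = 0"
      proof
        assume "S = {0..<int p}"
        then have "S \<inter> J = J" "card S = p" using Jsub by auto
        then show ?thesis unfolding disc_def using p by simp
      next
        assume "J = {0..<int p}"
        then have "S \<inter> J = S" "card J = p" using Ssub by auto
        then show ?thesis unfolding disc_def using p by simp
      qed
      then show ?thesis using K unfolding S_def J_def by simp
    next
      case False
      define N where "N = nat (b - a)"
      define m where "m = nat (d - c)"
      have Np: "N < p" "0 < N" and mp: "m < p" "0 < m" using ne False unfolding N_def m_def by auto
      have injS: "inj_on (\<lambda>x. (k * x) mod int p) {a..<b}" using False by (intro inj_mult_mod[OF p cop]) auto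
      have cS: "card S = N" unfolding S_def N_def using card_image[OF injS] by simp
      have injJ: "inj_on (\<lambda>x. (1 * x) mod int p) {c..<d}" using False by (intro inj_mult_mod[OF p]) auto
      have cJ: "card J = m" unfolding J_def m_def using card_image[OF injJ] by simp
      have memJ: "s \<in> J \<longleftrightarrow> (s - c) mod int p < d - c" if "s \<in> {0..<int p}" for s
      proof -
        have "s mod int p = s" using that by simp
        then show ?thesis unfolding J_def using mod_img_mem[OF p, of c d s] ne False by simp
      qed
      define P where "P x \<longleftrightarrow> (k * x - c) mod int p < d - c" for x
      have SJ: "S \<inter> J = (\<lambda>x. (k * x) mod int p) ` {x \<in> {a..<b}. P x}"
      proof -
        have "(k * x) mod int p \<in> J \<longleftrightarrow> P x" for x
        proof -
          have "(k * x) mod int p \<in> {0..<int p}" using p by simp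
          then have "(k * x) mod int p \<in> J \<longleftrightarrow> ((k * x) mod int p - c) mod int p < d - c" by (rule memJ)
          also have "((k * x) mod int p - c) mod int p = (k * x - c) mod int p" by (rule mod_diff_left_eq)
          finally show ?thesis unfolding P_def .
        qed
        then show ?thesis unfolding S_def by auto
      qed
      have "card (S \<inter> J) = card {x \<in> {a..<b}. P x}"
        unfolding SJ by (rule card_image) (rule inj_on_subset[OF injS], auto)
      also have "{x \<in> {a..<b}. P x} = (\<lambda>t. a + int t) ` {t \<in> {..<N}. P (a + int t)}"
      proof (rule set_eqI, rule iffI)
        fix x assume x: "x \<in> {x \<in> {a..<b}. P x}"
        then have "nat (x - a) \<in> {t \<in> {..<N}. P (a + int t)}" "x = a + int (nat (x - a))"
          unfolding N_def by auto
        then show "x \<in> (\<lambda>t. a + int t) ` {t \<in> {..<N}. P (a + int t)}" by blast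
      qed (auto simp: N_def)
      also have "card \<dots> = card {t \<in> {..<N}. P (a + int t)}"
        by (rule card_image) (auto simp: inj_on_def)
      finally have cSJ: "real (card (S \<inter> J)) = (\<Sum>t<N. if P (a + int t) then 1 else 0)"
        using card_filter_sum by simp
      define x0 where "x0 = real_of_int (k * a - c) / real p"
      have Pfrac: "P (a + int t) \<longleftrightarrow> frac (x0 + real t * (real_of_int k / real p)) < real m / real p" for t
      proof -
        have e: "x0 + real t * (real_of_int k / real p) = real_of_int (k * (a + int t) - c) / real p"
          unfolding x0_def using p by (simp add: field_simps)
        have "frac (x0 + real t * (real_of_int k / real p)) = real_of_int ((k * (a + int t) - c) mod int p) / real p"
          unfolding e by (rule frac_int_div[OF p])
        moreover have "real_of_int ((k * (a + int t) - c) mod int p) / real p < real m / real p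
            \<longleftrightarrow> (k * (a + int t) - c) mod int p < int m"
        proof -
          have "real_of_int ((k * (a + int t) - c) mod int p) / real p < real m / real p
              \<longleftrightarrow> real_of_int ((k * (a + int t) - c) mod int p) < real m" using p by (simp add: divide_strict_right_mono_neg divide_less_cancel)
          also have "\<dots> \<longleftrightarrow> (k * (a + int t) - c) mod int p < int m"
            by (metis of_int_less_iff of_int_of_nat_eq)
          finally show ?thesis .
        qed
        moreover have "int m = d - c" unfolding m_def using ne by simp
        ultimately show ?thesis unfolding P_def by simp
      qed
      have cnt_eq: "real (card (S \<inter> J)) = cnt (real_of_int k / p) (real m / p) x0 N"
        unfolding cSJ cnt_def using Pfrac by simp
      have "disc p J S = \<bar>cnt (real_of_int k / p) (real m / p) x0 N - real N * (real m / p)\<bar>"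
        unfolding disc_def cnt_eq[symmetric] cS cJ by simp
      also have "\<dots> \<le> K" using H Np mp by simp
      finally show ?thesis unfolding S_def J_def .
    qed
  qed
qed

lemma perm_disc_bound:
  fixes p :: nat and k :: int and K :: real
  assumes p: "p > 0" and cop: "coprime k (int p)" and K: "K \<ge> 0"
    and H: "\<And>x N m. N < p \<Longrightarrow> 0 < m \<Longrightarrow> m < p \<Longrightarrow>
              \<bar>cnt (real_of_int k / p) (real m / p) x N - real N * (real m / p)\<bar> \<le> K"
  shows "perm_disc p (\<lambda>s. (k * s) mod int p) \<le> K"
proof -
  define \<sigma> where "\<sigma> = (\<lambda>s. (k * s) mod int p)"
  define X where "X = {disc p J (\<sigma> ` I) | I J. I \<in> zintervals p \<and> J \<in> zintervals p}"
  have zsub: "zintervals p \<subseteq> Pow {0..<int p}" unfolding zintervals_def using p by auto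
  have "X \<subseteq> (\<lambda>(I, J). disc p J (\<sigma> ` I)) ` (Pow {0..<int p} \<times> Pow {0..<int p})"
  proof
    fix x assume "x \<in> X"
    then obtain I J where x: "x = disc p J (\<sigma> ` I)" and I: "I \<in> zintervals p" and J: "J \<in> zintervals p"
      unfolding X_def by blast
    show "x \<in> (\<lambda>(I, J). disc p J (\<sigma> ` I)) ` (Pow {0..<int p} \<times> Pow {0..<int p})"
      by (rule image_eqI[where x="(I, J)"]) (use x I J zsub in auto)
  qed
  then have finX: "finite X" by (rule finite_subset) auto
  have "(\<lambda>x. x mod int p) ` {0..<0} \<in> zintervals p" unfolding zintervals_def by blast
  then have neX: "X \<noteq> {}" unfolding X_def by blast
  have "x \<le> K" if xX: "x \<in> X" for x
  proof -
    obtain I J where x: "x = disc p J (\<sigma> ` I)" and I: "I \<in> zintervals p" and J: "J \<in> zintervals p"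
      using xX unfolding X_def by blast
    obtain a b where Ie: "I = (\<lambda>x. x mod int p) ` {a..<b}" using I unfolding zintervals_def by blast
    obtain c d where Je: "J = (\<lambda>x. x mod int p) ` {c..<d}" using J unfolding zintervals_def by blast
    have "\<sigma> ` I = (\<lambda>x. (k * x) mod int p) ` {a..<b}"
      unfolding Ie \<sigma>_def image_image by (simp add: mod_mult_right_eq)
    then show ?thesis unfolding x Je using disc_pair[OF p cop K H] by simp
  qed
  then have "Max X \<le> K" using finX neX by simp
  then show ?thesis unfolding perm_disc_def X_def \<sigma>_def .
qed



lemma sqrt2_irrat: "sqrt 2 \<notin> \<rat>"
proof
  assume "sqrt 2 \<in> \<rat>"
  then obtain m n :: nat where n: "n \<noteq> 0" and sq: "\<bar>sqrt 2\<bar> = real m / real n" and cop: "coprime m n"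
    by (rule Rats_abs_nat_div_natE)
  have "real m = sqrt 2 * real n" using sq n by (simp add: field_simps)
  then have "real (m^2) = real (2 * n^2)" by (simp add: power_mult_distrib)
  then have eq: "m^2 = 2 * n^2" by (simp only: of_nat_eq_iff)
  have p2: "prime (2::nat)" by simp
  have "2 dvd m^2" using eq by simp
  then have "2 dvd m" using p2 prime_dvd_power by blast
  then obtain j where "m = 2 * j" by blast
  then have "n^2 = 2 * j^2" using eq by (simp add: power_mult_distrib)
  then have "2 dvd n^2" by simp
  then have "2 dvd n" using p2 prime_dvd_power by blast
  then have "2 dvd gcd m n" using \<open>2 dvd m\<close> by simp
  then show False using cop by simp
qed

lemma sqrt2_bounds: "1 < sqrt (2::real)" "sqrt (2::real) < 2"
proof -
  show "1 < sqrt (2::real)" by (simp add: real_less_rsqrt)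
  have "(sqrt (2::real))^2 < 2^2" by simp
  then show "sqrt (2::real) < 2" by (rule power_less_imp_less_base) simp
qed

lemma sqrt2_in_CB:
  assumes B: "B \<ge> 2"
  shows "sqrt 2 - 1 \<in> bounded_avg_cf B"
proof -
  define s where "s = sqrt (2::real)"
  have s: "1 < s" "s < 2" using sqrt2_bounds unfolding s_def by auto
  have ss: "s * s = 2" unfolding s_def by simp
  have inv: "1 / (s - 1) = s + 1" using s ss by (simp add: field_simps)
  have fr1: "frac (s - 1) = s - 1" using s by (simp add: frac_eq)
  have fr2: "frac (s + 1) = s - 1"
  proof -
    have "s + 1 = (s - 1) + of_int 2" by simp
    then have "frac (s + 1) = frac ((s - 1) + of_int 2)" by (simp only:)
    also have "\<dots> = frac (s - 1)" by (rule frac_add_of_int_right)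
    finally show ?thesis using fr1 by simp
  qed
  have rem: "cf_rem (s - 1) (Suc n) = s + 1" for n
    by (induction n) (simp_all add: cf_rem.simps(2) fr1 fr2 inv)
  have q: "cf_quot (s - 1) (Suc n) = 2" for n
    unfolding cf_quot_def rem using s by (intro floor_unique) auto
  have irr: "s - 1 \<notin> \<rat>"
  proof
    assume "s - 1 \<in> \<rat>"
    then have "s - 1 + 1 \<in> \<rat>" by (intro Rats_add) auto
    then show False using sqrt2_irrat unfolding s_def by simp
  qed
  have "real_of_int (\<Sum>i=1..m. cf_quot (s - 1) i) \<le> B * real m" for m
  proof -
    have "(\<Sum>i=1..m. cf_quot (s - 1) i) = (\<Sum>i=1..m. 2)"
    proof (intro sum.cong refl)
      fix i assume "i \<in> {1..m}"
      then have "i = Suc (i - 1)" by simp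
      then show "cf_quot (s - 1) i = 2" using q[of "i - 1"] by simp
    qed
    then have "real_of_int (\<Sum>i=1..m. cf_quot (s - 1) i) = 2 * real m" by simp
    also have "\<dots> \<le> B * real m" using B by (intro mult_right_mono) auto
    finally show ?thesis .
  qed
  then show ?thesis using irr unfolding bounded_avg_cf_def s_def by auto
qed

lemma CB_far_from_1:
  assumes B: "B \<ge> 2" and a: "\<alpha> \<in> bounded_avg_cf B"
  shows "\<bar>\<alpha> - 1\<bar> \<ge> 1 / (2 * B + 1)"
proof -
  have irr: "\<alpha> \<notin> \<rat>" using a unfolding bounded_avg_cf_def by auto
  have all: "\<forall>m\<ge>1. real_of_int (\<Sum>i=1..m. cf_quot \<alpha> i) \<le> B * real m"
    using a unfolding bounded_avg_cf_def mem_Collect_eq by (elim conjE)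
  have s1: "real_of_int (\<Sum>i=1..1. cf_quot \<alpha> i) \<le> B * real (1::nat)" using all by (intro all[rule_format]) simp
  have s2: "real_of_int (\<Sum>i=1..2. cf_quot \<alpha> i) \<le> B * real (2::nat)" by (intro all[rule_format]) simp
  have "{1..2::nat} = {1, 2}" by auto
  then have s2': "real_of_int (cf_quot \<alpha> 1 + cf_quot \<alpha> 2) \<le> 2 * B" using s2 by simp
  define a0 a1 a2 where "a0 = cf_quot \<alpha> 0" "a1 = cf_quot \<alpha> 1" "a2 = cf_quot \<alpha> 2"
  define x1 x2 where "x1 = cf_rem \<alpha> 1" "x2 = cf_rem \<alpha> 2"
  have A1: "a1 \<le> B" using s1 unfolding a0_a1_a2_def by simp
  have A2: "a1 + a2 \<le> 2 * B" using s2' unfolding a0_a1_a2_def by simp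
  have e0: "\<alpha> = a0 + 1 / x1" using cf_rem_eq[OF irr, of 0] unfolding a0_a1_a2_def x1_x2_def by simp
  have e1: "x1 = a1 + 1 / x2" using cf_rem_eq[OF irr, of 1] unfolding a0_a1_a2_def x1_x2_def by (simp add: numeral_2_eq_2)
  have x1g: "x1 > 1" using cf_rem_gt1[OF irr, of 0] unfolding x1_x2_def by simp
  have x2g: "x2 > 1" using cf_rem_gt1[OF irr, of 1] unfolding x1_x2_def by (simp add: numeral_2_eq_2)
  have a1g: "a1 \<ge> 1" using cf_quot_ge1[OF irr, of 0] unfolding a0_a1_a2_def by simp
  have x1a: "x1 < a1 + 1" unfolding x1_x2_def a0_a1_a2_def cf_quot_def by simp
  have x2a: "x2 < a2 + 1" unfolding x1_x2_def a0_a1_a2_def cf_quot_def by simp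
  have Bp: "2 * B + 1 > 0" using B by simp
  show ?thesis
  proof (cases "a0 \<ge> 1")
    case True
    have "1 / (a1 + 1) < 1 / x1" using x1a x1g by (intro divide_strict_left_mono) auto
    moreover have "1 / (2 * B + 1) \<le> 1 / (a1 + 1)" using A1 a1g B by (intro divide_left_mono) auto
    moreover have "real_of_int a0 \<ge> 1" using True by simp
    ultimately show ?thesis using e0 by linarith
  next
    case False
    then have a0: "real_of_int a0 \<le> 0" by simp
    have "x1 \<ge> 1 + 1 / x2" using e1 a1g by simp
    moreover have "0 < x1 * (1 + 1 / x2)"
    proof -
      have "0 < 1 / x2" using x2g by simp
      then show ?thesis using x1g by (intro mult_pos_pos) linarith+
    qed
    ultimately have "1 / x1 \<le> 1 / (1 + 1 / x2)" using x2g by (intro divide_left_mono) auto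
    also have "1 / (1 + 1 / x2) = 1 - 1 / (x2 + 1)" using x2g by (simp add: field_simps)
    finally have h: "1 / x1 \<le> 1 - 1 / (x2 + 1)" .
    have "x2 + 1 < 2 * B + 1" using x2a A2 a1g by linarith
    then have "1 / (2 * B + 1) < 1 / (x2 + 1)" using x2g by (intro divide_strict_left_mono) auto
    then show ?thesis using h e0 a0 by linarith
  qed
qed

lemma cfQ_growth:
  assumes irr: "\<alpha> \<notin> \<rat>"
  shows "real_of_int (cfQ \<alpha> (n+1)) \<ge> 2 ^ (n div 2)"
proof (induction n rule: less_induct)
  case (less n)
  show ?case
  proof (cases "n \<le> 1")
    case True
    have "1 \<le> cfQ \<alpha> (n+1)" using cfQ_basic[OF irr, of n] by simp
    then show ?thesis using True by (cases n) auto
  next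
    case False
    define m where "m = n - 2"
    have m: "n = m + 2" using False unfolding m_def by simp
    have IH: "real_of_int (cfQ \<alpha> (m+1)) \<ge> 2 ^ (m div 2)" using less[of m] m by simp
    have b1: "0 \<le> cfQ \<alpha> (m+1)" "cfQ \<alpha> (m+1) \<le> cfQ \<alpha> (m+2)" using cfQ_basic[OF irr, of "m+1"] by auto
    have a: "cf_quot \<alpha> (m+2) \<ge> 1" using cf_quot_ge1[OF irr, of "m+1"] by simp
    have "cfQ \<alpha> (m+3) = cf_quot \<alpha> (m+2) * cfQ \<alpha> (m+2) + cfQ \<alpha> (m+1)"
      by (simp add: numeral_3_eq_3 numeral_2_eq_2)
    moreover have "cf_quot \<alpha> (m+2) * cfQ \<alpha> (m+2) \<ge> 1 * cfQ \<alpha> (m+2)"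
      using a b1 by (intro mult_right_mono) auto
    ultimately have "cfQ \<alpha> (m+3) \<ge> 2 * cfQ \<alpha> (m+1)" using b1 by linarith
    then have d: "real_of_int (cfQ \<alpha> (m+3)) \<ge> 2 * real_of_int (cfQ \<alpha> (m+1))"
      by (metis of_int_le_iff of_int_mult of_int_numeral)
    have nd: "n div 2 = Suc (m div 2)" using m by simp
    have "n + 1 = m + 3" using m by simp
    have "(2::real) ^ (n div 2) = 2 * 2 ^ (m div 2)" unfolding nd by simp
    then have fin: "2 ^ (n div 2) \<le> real_of_int (cfQ \<alpha> (m+3))" using d IH by linarith
    have eqc: "cfQ \<alpha> (n + 1) = cfQ \<alpha> (m + 3)" using \<open>n + 1 = m + 3\<close> by (rule arg_cong)
    show ?thesis unfolding eqc by (rule fin)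
  qed
qed



lemma kron:
  fixes \<alpha> \<beta> l x :: real
  assumes irr: "\<alpha> \<notin> \<rat>" and l: "0 \<le> l" "l \<le> 1" and N: "N < cfQ \<alpha> (n+1)"
  shows "\<bar>cnt \<beta> l x N - N * l\<bar> \<le> 3 * (\<Sum>j=1..n. cf_quot \<alpha> j) + 2 * \<bar>\<beta> - \<alpha>\<bar> * N^2"
proof (rule ostrowski[where Q = "cfQ \<alpha>" and P = "cfP \<alpha>" and a = "cf_quot \<alpha>"])
  show "cfQ \<alpha> 0 = 0" "cfQ \<alpha> 1 = 1" by simp_all
  show "cfQ \<alpha> (n + 2) = cf_quot \<alpha> (n + 1) * cfQ \<alpha> (n + 1) + cfQ \<alpha> n" for n by (simp add: numeral_2_eq_2)
  show "1 \<le> cf_quot \<alpha> (n + 1)" for n using cf_quot_ge1[OF irr, of n] by simp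
  show "coprime (cfP \<alpha> (n + 1)) (cfQ \<alpha> (n + 1))" for n using cf_coprime[OF irr, of n] by simp
  show "\<bar>real_of_int (cfQ \<alpha> (n + 1)) * \<beta> - real_of_int (cfP \<alpha> (n + 1))\<bar>
        \<le> 1 / real_of_int (cfQ \<alpha> (n + 2)) + real_of_int (cfQ \<alpha> (n + 1)) * \<bar>\<beta> - \<alpha>\<bar>" for n
  proof -
    have Q: "real_of_int (cfQ \<alpha> (n + 1)) \<ge> 0" using cfQ_basic[OF irr, of n] by simp
    have split: "real_of_int (cfQ \<alpha> (n + 1)) * \<beta> - real_of_int (cfP \<alpha> (n + 1))
        = (real_of_int (cfQ \<alpha> (n + 1)) * \<alpha> - real_of_int (cfP \<alpha> (n + 1))) + real_of_int (cfQ \<alpha> (n + 1)) * (\<beta> - \<alpha>)"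
      by (simp add: algebra_simps)
    have "\<bar>real_of_int (cfQ \<alpha> (n + 1)) * \<beta> - real_of_int (cfP \<alpha> (n + 1))\<bar>
        \<le> \<bar>real_of_int (cfQ \<alpha> (n + 1)) * \<alpha> - real_of_int (cfP \<alpha> (n + 1))\<bar> + real_of_int (cfQ \<alpha> (n + 1)) * \<bar>\<beta> - \<alpha>\<bar>"
    proof -
      have t: "\<bar>(real_of_int (cfQ \<alpha> (n + 1)) * \<alpha> - real_of_int (cfP \<alpha> (n + 1))) + real_of_int (cfQ \<alpha> (n + 1)) * (\<beta> - \<alpha>)\<bar>
        \<le> \<bar>real_of_int (cfQ \<alpha> (n + 1)) * \<alpha> - real_of_int (cfP \<alpha> (n + 1))\<bar> + \<bar>real_of_int (cfQ \<alpha> (n + 1)) * (\<beta> - \<alpha>)\<bar>"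
        by (rule abs_triangle_ineq)
      have "\<bar>real_of_int (cfQ \<alpha> (n + 1)) * (\<beta> - \<alpha>)\<bar> = real_of_int (cfQ \<alpha> (n + 1)) * \<bar>\<beta> - \<alpha>\<bar>"
        using Q by (simp add: abs_mult)
      then show ?thesis using t unfolding split by simp
    qed
    moreover have "\<bar>real_of_int (cfQ \<alpha> (n + 1)) * \<alpha> - real_of_int (cfP \<alpha> (n + 1))\<bar> \<le> 1 / real_of_int (cfQ \<alpha> (n + 2))"
      using cf_approx[OF irr, of n] by (simp add: numeral_2_eq_2)
    ultimately show ?thesis by linarith
  qed
qed (use l N in auto)

lemma prime_step:
  fixes B M \<alpha> :: real and p k :: nat
  assumes B: "B \<ge> 2" and a: "\<alpha> \<in> bounded_avg_cf B" and p: "prime p" and k: "k \<in> {1..<p}"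
    and M: "\<bar>real k / real p - \<alpha>\<bar> * (real p)^2 \<le> M"
  shows "perm_disc p (\<lambda>s. (int k * s) mod int p) \<le> 6 * B * (log 2 (real p) + 1) + 2 * M"
proof -
  have irr: "\<alpha> \<notin> \<rat>" using a unfolding bounded_avg_cf_def by auto
  have all: "\<forall>m\<ge>1. real_of_int (\<Sum>i=1..m. cf_quot \<alpha> i) \<le> B * real m"
    using a unfolding bounded_avg_cf_def mem_Collect_eq by (elim conjE)
  have p2: "p \<ge> 2" using p by (rule prime_ge_2_nat)
  have pp: "real p > 0" using p2 by simp
  define L where "L = nat \<lceil>log 2 (real p)\<rceil>"
  have lg0: "log 2 (real p) \<ge> 0" using p2 by simp
  have Lr: "real L = of_int \<lceil>log 2 (real p)\<rceil>" unfolding L_def using lg0 by simp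
  have Lle: "real L \<le> log 2 (real p) + 1" unfolding Lr by simp
  have Lge: "log 2 (real p) \<le> real L" unfolding Lr by simp
  have pL: "real p \<le> 2 ^ L"
  proof -
    have "real p \<le> 2 powr (real L)" using Lge pp by (simp add: log_le_iff)
    also have "\<dots> = 2 ^ L" by (simp add: powr_realpow)
    finally show ?thesis .
  qed
  have QL: "2 ^ L \<le> real_of_int (cfQ \<alpha> (2 * L + 1))" using cfQ_growth[OF irr, of "2 * L"] by simp
  have cop: "coprime (int k) (int p)"
  proof -
    have "\<not> p dvd k" using k by (auto dest: dvd_imp_le)
    then have "coprime p k" using p by (intro prime_imp_coprime)
    then show ?thesis by (simp add: coprime_commute)
  qed
  have M0: "M \<ge> 0" using M by (metis abs_ge_zero order_trans zero_le_mult_iff zero_le_power2)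
  define K where "K = 6 * B * real L + 2 * M"
  have K0: "K \<ge> 0" unfolding K_def using B M0 by simp
  have sumL: "real_of_int (\<Sum>j=1..2 * L. cf_quot \<alpha> j) \<le> B * real (2 * L)"
  proof (cases "L = 0")
    case True then show ?thesis by simp
  next
    case False then show ?thesis by (intro all[rule_format]) simp
  qed
  have "perm_disc p (\<lambda>s. (int k * s) mod int p) \<le> K"
  proof (rule perm_disc_bound)
    show "p > 0" using p2 by simp
    show "coprime (int k) (int p)" by (rule cop)
    show "K \<ge> 0" by (rule K0)
    fix x :: real and N m :: nat
    assume N: "N < p" and m: "0 < m" "m < p"
    have l: "0 \<le> real m / real p" "real m / real p \<le> 1" using m pp by auto
    have n1: "real N < real p" using N by simp
    have n2: "real_of_int (int N) = real N" by simp
    have "real_of_int (int N) < real_of_int (cfQ \<alpha> (2 * L + 1))" using n1 n2 pL QL by linarith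
    then have NQ: "int N < cfQ \<alpha> (2 * L + 1)" by (simp only: of_int_less_iff)
    have kr: "\<bar>cnt (real_of_int (int k) / real p) (real m / real p) x N - real N * (real m / real p)\<bar>
        \<le> 3 * real_of_int (\<Sum>j=1..2 * L. cf_quot \<alpha> j) + 2 * \<bar>real_of_int (int k) / real p - \<alpha>\<bar> * (real N)^2"
      using kron[OF irr l NQ] by simp
    have "\<bar>real_of_int (int k) / real p - \<alpha>\<bar> * (real N)^2 \<le> \<bar>real k / real p - \<alpha>\<bar> * (real p)^2"
      using N by (simp add: mult_left_mono power_mono)
    then have "2 * \<bar>real_of_int (int k) / real p - \<alpha>\<bar> * (real N)^2 \<le> 2 * M" using M by simp
    then show "\<bar>cnt (real_of_int (int k) / real p) (real m / real p) x N - real N * (real m / real p)\<bar> \<le> K"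
      using kr sumL unfolding K_def by simp
  qed
  also have "K \<le> 6 * B * (log 2 (real p) + 1) + 2 * M"
    unfolding K_def using Lle B by simp
  finally show ?thesis .
qed



lemma ln_ge_1: "real p \<ge> 3 \<Longrightarrow> ln (real p) \<ge> 1"
proof -
  assume p: "real p \<ge> 3"
  have "exp 1 \<le> (3::real)" by (rule exp_le)
  then have "1 \<le> ln (3::real)" by (subst ln_ge_iff) auto
  also have "ln 3 \<le> ln (real p)" using p by simp
  finally show ?thesis .
qed

theorem mainTheorem16:
  fixes B :: real
  assumes "B \<ge> 2"
    and "\<exists>C::real. \<forall>\<^sub>F n in sequentially.
           (INF \<alpha>\<in>bounded_avg_cf B. Min ((\<lambda>k. \<bar>real k / real n - \<alpha>\<bar>) ` {1..n}))
             \<le> C * ln (real n) / (real n)^2"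
  shows "\<exists>C'::real. \<forall>\<^sub>F p in sequentially. prime (p::nat) \<longrightarrow>
           (\<exists>k\<in>{1..<p}. perm_disc p (\<lambda>s. (int k * s) mod int p) \<le> C' * ln (real p))"
proof -
  note B = assms(1)
  from assms(2) obtain C where ev: "\<forall>\<^sub>F n in sequentially.
           (INF \<alpha>\<in>bounded_avg_cf B. Min ((\<lambda>k. \<bar>real k / real n - \<alpha>\<bar>) ` {1..n}))
             \<le> C * ln (real n) / (real n)^2" by blast
  define C1 where "C1 = \<bar>C\<bar> + 1"
  define C' where "C' = 6 * B / ln 2 + 6 * B + 4 * C1"
  define N0 where "N0 = nat \<lceil>C1 * (2 * B + 1)\<rceil> + 3"
  have "\<forall>\<^sub>F p in sequentially. prime p \<longrightarrow>
           (\<exists>k\<in>{1..<p}. perm_disc p (\<lambda>s. (int k * s) mod int p) \<le> C' * ln (real p))"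
    using eventually_conj[OF ev eventually_ge_at_top[of N0]]
  proof (rule eventually_mono)
    fix p :: nat
    assume hp: "(INF \<alpha>\<in>bounded_avg_cf B. Min ((\<lambda>k. \<bar>real k / real p - \<alpha>\<bar>) ` {1..p}))
             \<le> C * ln (real p) / (real p)^2 \<and> N0 \<le> p"
    show "prime p \<longrightarrow> (\<exists>k\<in>{1..<p}. perm_disc p (\<lambda>s. (int k * s) mod int p) \<le> C' * ln (real p))"
    proof
      assume pr: "prime p"
      have pN0: "N0 \<le> p" using hp by simp
      have C1p: "C1 * (2 * B + 1) < real p"
      proof -
        have "C1 * (2 * B + 1) \<le> of_int \<lceil>C1 * (2 * B + 1)\<rceil>" by simp
        also have "\<dots> \<le> real (nat \<lceil>C1 * (2 * B + 1)\<rceil>)" by simp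
        also have "\<dots> < real N0" unfolding N0_def by simp
        finally show ?thesis using pN0 by linarith
      qed
      have p3: "real p \<ge> 3" using pN0 unfolding N0_def by simp
      have pp: "real p > 0" using p3 by simp
      have lnp: "ln (real p) \<ge> 1" using ln_ge_1[OF p3] .
      define X where "X = (\<lambda>\<alpha>. Min ((\<lambda>k. \<bar>real k / real p - \<alpha>\<bar>) ` {1..p})) ` bounded_avg_cf B"
      have finA: "finite ((\<lambda>k. \<bar>real k / real p - \<alpha>\<bar>) ` {1..p})" for \<alpha> by simp
      have neA: "(\<lambda>k. \<bar>real k / real p - \<alpha>\<bar>) ` {1..p} \<noteq> {}" for \<alpha> using p3 by auto
      have m0: "0 \<le> Min ((\<lambda>k. \<bar>real k / real p - \<alpha>\<bar>) ` {1..p})" for \<alpha>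
        by (subst Min_ge_iff[OF finA neA]) auto
      have X0: "y \<ge> 0" if "y \<in> X" for y
        using that m0 unfolding X_def by blast
      have Xne: "X \<noteq> {}" unfolding X_def using sqrt2_in_CB[OF B] by blast
      have Xbdd: "bdd_below X" using X0 by (intro bdd_belowI) auto
      have i1: "Inf X \<le> C * ln (real p) / (real p)^2" using hp unfolding X_def by simp
      have i2: "0 < 1 / (real p)^2" using pp by simp
      have "Inf X < C * ln (real p) / (real p)^2 + 1 / (real p)^2" using i1 i2 by linarith
      then obtain y where "y \<in> X" and y: "y < C * ln (real p) / (real p)^2 + 1 / (real p)^2"
        using cInf_less_iff[OF Xne Xbdd] by blast
      then obtain \<alpha> where a: "\<alpha> \<in> bounded_avg_cf B"
        and ya: "y = Min ((\<lambda>k. \<bar>real k / real p - \<alpha>\<bar>) ` {1..p})" unfolding X_def by blast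
      have "y \<in> (\<lambda>k. \<bar>real k / real p - \<alpha>\<bar>) ` {1..p}" unfolding ya by (rule Min_in[OF finA neA])
      then obtain k where k: "k \<in> {1..p}" and yk: "y = \<bar>real k / real p - \<alpha>\<bar>" by blast
      define \<eta> where "\<eta> = \<bar>real k / real p - \<alpha>\<bar>"
      have "\<eta> * (real p)^2 < (C * ln (real p) / (real p)^2 + 1 / (real p)^2) * (real p)^2"
        using y yk pp unfolding \<eta>_def by (intro mult_strict_right_mono) auto
      also have "\<dots> = C * ln (real p) + 1" using pp by (simp add: field_simps)
      also have "\<dots> \<le> C1 * (ln (real p) + 1)"
      proof -
        have h1: "C * ln (real p) \<le> \<bar>C\<bar> * ln (real p)" using lnp by (intro mult_right_mono) auto
        have h2: "(\<bar>C\<bar> + 1) * (ln (real p) + 1) = \<bar>C\<bar> * ln (real p) + \<bar>C\<bar> + ln (real p) + 1"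
          by (simp add: algebra_simps)
        have h3: "\<bar>C\<bar> \<ge> 0" by simp
        show ?thesis unfolding C1_def h2 using h1 h3 lnp by linarith
      qed
      finally have etaM: "\<eta> * (real p)^2 \<le> C1 * (ln (real p) + 1)" by simp
      have kp: "k \<noteq> p"
      proof
        assume "k = p"
        then have "\<eta> = \<bar>\<alpha> - 1\<bar>" unfolding \<eta>_def using pp by simp
        then have far: "\<eta> \<ge> 1 / (2 * B + 1)" using CB_far_from_1[OF B a] by simp
        have "ln (real p) \<le> real p - 1" using ln_le_minus_one[OF pp] .
        then have "C1 * (ln (real p) + 1) \<le> C1 * real p" unfolding C1_def by (intro mult_left_mono) auto
        then have "\<eta> * (real p)^2 \<le> C1 * real p" using etaM by linarith
        then have "\<eta> * real p \<le> C1" using pp by (simp add: power2_eq_square)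
        moreover have "1 / (2 * B + 1) * real p > C1"
          using C1p B by (simp add: field_simps)
        moreover have "1 / (2 * B + 1) * real p \<le> \<eta> * real p" using far pp by (intro mult_right_mono) auto
        ultimately show False by linarith
      qed
      have k': "k \<in> {1..<p}" using k kp by auto
      have "perm_disc p (\<lambda>s. (int k * s) mod int p) \<le> 6 * B * (log 2 (real p) + 1) + 2 * (C1 * (ln (real p) + 1))"
        by (rule prime_step[OF B a pr k']) (use etaM in \<open>simp add: \<eta>_def\<close>)
      also have "\<dots> \<le> C' * ln (real p)"
      proof -
        have lg: "log 2 (real p) = ln (real p) / ln 2" by (simp add: log_def)
        have l2: "ln (2::real) > 0" by simp
        have "6 * B * (log 2 (real p) + 1) = (6 * B / ln 2) * ln (real p) + 6 * B"
          unfolding lg using l2 by (simp add: field_simps)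
        moreover have "6 * B \<le> 6 * B * ln (real p)" using B lnp by simp
        moreover have "2 * C1 * 1 \<le> 2 * C1 * ln (real p)" using lnp unfolding C1_def
          by (intro mult_left_mono) auto
        ultimately show ?thesis unfolding C'_def by (simp add: algebra_simps)
      qed
      finally show "\<exists>k\<in>{1..<p}. perm_disc p (\<lambda>s. (int k * s) mod int p) \<le> C' * ln (real p)"
        using k' by blast
    qed
  qed
  then show ?thesis by blast
qed

end
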